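(* Let $\alpha>0$ and define, for $\varrho\in[0,1]$, \[ \Xi(\varrho)=-S(\varrho)+\varrho\log\pi_1(\alpha\varrho)+(1-\varrho)\log\pi_1\bigl(\alpha(1-\varrho)\bigr)-\alpha\varrho(1-\varrho). \] Then $\Xi$ is continuous on $[0,1]$, symmetric about $\varrho=1/2$ (i.e. $\Xi(\varrho)=\Xi(1-\varrho)$), strictly convex on $[0,1]$, and consequently $\Xi(\varrho)<\Xi(0)$ for all $\varrho\in(0,1)$. Moreover, the function $G(\eta)=\eta\log\frac{1-\mathrm{e}^{-\eta}}{\eta}$ satisfies $G''(\eta)+1>0$ for all $\eta>0$.
   Context: $S(\varrho)=\varrho\log\varrho+(1-\varrho)\log(1-\varrho)$ with the convention $0\log0=0$; $\pi_1(x)=1-\mathrm{e}^{-x}$; the terms $\varrho\log\pi_1(\alpha\varrho)$ and $(1-\varrho)\log\pi_1(\alpha(1-\varrho))$ are interpreted as $0$ at $\varrho=0$ and $\varrho=1$ respectively. *)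

theory Defs
  imports "HOL-Analysis.Analysis"
begin

definition Sent :: "real \<Rightarrow> real" where
  "Sent \<rho> = (if \<rho> = 0 then 0 else \<rho> * ln \<rho>)
           + (if \<rho> = 1 then 0 else (1 - \<rho>) * ln (1 - \<rho>))"

definition pi1 :: "real \<Rightarrow> real" where
  "pi1 x = 1 - exp (- x)"

definition Xi :: "real \<Rightarrow> real \<Rightarrow> real" where
  "Xi \<alpha> \<rho> = - Sent \<rho>
      + (if \<rho> = 0 then 0 else \<rho> * ln (pi1 (\<alpha> * \<rho>)))
      + (if \<rho> = 1 then 0 else (1 - \<rho>) * ln (pi1 (\<alpha> * (1 - \<rho>))))
      - \<alpha> * \<rho> * (1 - \<rho>)"

definition Gfun :: "real \<Rightarrow> real" where
  "Gfun \<eta> = \<eta> * ln ((1 - exp (- \<eta>)) / \<eta>)"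

definition strict_convex_on :: "real set \<Rightarrow> (real \<Rightarrow> real) \<Rightarrow> bool" where
  "strict_convex_on A f \<longleftrightarrow>
     (\<forall>x\<in>A. \<forall>y\<in>A. \<forall>t. x \<noteq> y \<and> 0 < t \<and> t < 1 \<longrightarrow>
        f ((1 - t) * x + t * y) < (1 - t) * f x + t * f y)"

end

theory Submission imports Defs begin

definition gk :: "real \<Rightarrow> real" where
  "gk s = s * (exp s - exp (-s)) - s^2 - exp s - exp (-s) + 2"

lemma gk_pos: assumes "s > 0" shows "gk s > 0"
proof -
  have d: "\<And>x. (gk has_real_derivative x * (exp x + exp (-x) - 2)) (at x)"
    unfolding gk_def by (auto intro!: derivative_eq_intros simp: algebra_simps)
  obtain z where z: "0 < z" "z < s" "gk s - gk 0 = (s - 0) * (z * (exp z + exp (-z) - 2))"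
    using MVT2[OF assms, of gk "\<lambda>x. x * (exp x + exp (-x) - 2)"] d by blast
  have "exp z + exp (-z) - 2 = (exp (z/2) - exp (-z/2))^2"
    by (simp add: power2_eq_square algebra_simps flip: exp_add)
  moreover have "exp (z/2) \<noteq> exp (-z/2)" using z by simp
  ultimately have "exp z + exp (-z) - 2 > 0" by simp
  then have "gk s - gk 0 > 0" using z assms by simp
  moreover have "gk 0 = 0" by (simp add: gk_def)
  ultimately show ?thesis by simp
qed

lemma key: fixes e :: real assumes "e > 0" shows "e * (1 - exp (-e)^2) - e^2 * exp (-e) - (1 - exp (-e))^2 > 0"
proof -
  have "e * (1 - exp (-e)^2) - e^2 * exp (-e) - (1 - exp (-e))^2 = exp (-e) * gk e"
    by (simp add: gk_def algebra_simps power2_eq_square flip: exp_add)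
  then show ?thesis using gk_pos[OF assms] by simp
qed

definition G1 :: "real \<Rightarrow> real" where
  "G1 e = ln (1 - exp (-e)) - ln e + e * exp (-e) / (1 - exp (-e)) - 1"

definition G2 :: "real \<Rightarrow> real" where
  "G2 e = exp (-e) / (1 - exp (-e)) - 1 / e
     + ((exp (-e) - e * exp (-e)) * (1 - exp (-e)) - e * exp (-e) * exp (-e)) / (1 - exp (-e))^2"

lemma G1_deriv: assumes "e > 0" shows "(Gfun has_real_derivative G1 e) (at e)"
proof -
  have ex: "\<And>x::real. x > 0 \<Longrightarrow> exp (-x) < 1" by simp
  have "((\<lambda>x. x * (ln (1 - exp (-x)) - ln x)) has_real_derivative G1 e) (at e)"
    using assms ex[OF assms] unfolding G1_def
    by (auto intro!: derivative_eq_intros simp: field_simps)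
  then show ?thesis
  proof (rule has_field_derivative_transform_within_open[where S="{0<..}"])
    fix x :: real assume "x \<in> {0<..}"
    then have "x > 0" by simp
    then have "1 - exp (-x) > 0" using ex by simp
    then show "x * (ln (1 - exp (-x)) - ln x) = Gfun x"
      unfolding Gfun_def using \<open>x > 0\<close> by (simp add: ln_div)
  qed (use assms in auto)
qed

lemma G2_deriv: assumes "e > 0" shows "(G1 has_real_derivative G2 e) (at e)"
proof -
  have ex: "exp (-e) < 1" using assms by simp
  show ?thesis unfolding G1_def G2_def using assms ex
    by (auto intro!: derivative_eq_intros simp: field_simps power2_eq_square)
qed

lemma G2_pos: assumes "e > 0" shows "G2 e + 1 > 0"
proof -
  define v where "v = exp (-e)"
  have v: "0 < v" "v < 1" using assms by (auto simp: v_def)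
  have 1: "1 - v \<noteq> 0" using v by simp
  have "G2 e + 1 = (e * (1 - v^2) - e^2 * v - (1 - v)^2) / (e * (1 - v)^2)"
    unfolding G2_def v_def[symmetric] using v assms 1
    by (simp add: divide_simps power2_eq_square) (simp add: algebra_simps)
  moreover have "e * (1 - v^2) - e^2 * v - (1 - v)^2 > 0" using key[OF assms] by (simp add: v_def)
  moreover have "e * (1 - v)^2 > 0" using v assms by simp
  ultimately show ?thesis by simp
qed

lemma deriv2_G: assumes "e > 0" shows "deriv (deriv Gfun) e = G2 e"
proof -
  have "(deriv Gfun has_real_derivative G2 e) (at e)"
    using G2_deriv[OF assms]
  proof (rule has_field_derivative_transform_within_open[where S="{0<..}"])
    fix x :: real assume "x \<in> {0<..}" then show "G1 x = deriv Gfun x"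
      using DERIV_imp_deriv[OF G1_deriv, of x] by simp
  qed (use assms in auto)
  then show ?thesis by (rule DERIV_imp_deriv)
qed


lemma Gfun_isCont0: "isCont Gfun 0"
proof -
  have "((\<lambda>x. exp (- x)) has_real_derivative - 1) (at 0)"
    by (auto intro!: derivative_eq_intros)
  from DERIV_D[OF this] have "((\<lambda>h. (exp (- h) - 1) / h) \<longlongrightarrow> - 1) (at (0::real))" by simp
  then have "((\<lambda>h::real. - ((exp (- h) - 1) / h)) \<longlongrightarrow> - (- 1::real)) (at (0::real))" by (rule tendsto_minus)
  then have q: "((\<lambda>h. (1 - exp (- h)) / h) \<longlongrightarrow> 1) (at (0::real))"
    by (simp add: minus_divide_left)
  have "((\<lambda>h. ln ((1 - exp (- h)) / h)) \<longlongrightarrow> ln 1) (at (0::real))"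
    by (rule tendsto_ln[OF q]) simp
  then have "((\<lambda>h. h * ln ((1 - exp (- h)) / h)) \<longlongrightarrow> 0 * ln 1) (at (0::real))"
    by (intro tendsto_mult tendsto_ident_at)
  then show ?thesis unfolding isCont_def Gfun_def by simp
qed

lemma Gfun_isCont: assumes "x \<ge> 0" shows "isCont Gfun x"
proof (cases "x = 0")
  case True then show ?thesis using Gfun_isCont0 by simp
next
  case False then have "x > 0" using assms by simp
  then show ?thesis using G1_deriv DERIV_isCont by blast
qed

definition XiG :: "real \<Rightarrow> real \<Rightarrow> real" where
  "XiG a r = ln a + (Gfun (a * r) + Gfun (a * (1 - r))) / a - a * r * (1 - r)"

lemma ln_q: fixes x :: real assumes "x > 0" shows "ln ((1 - exp (- x)) / x) = ln (1 - exp (- x)) - ln x"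
proof -
  have "exp (- x) < 1" using assms by simp
  then show ?thesis using assms by (simp add: ln_div)
qed

lemma Xi_eq: assumes a: "a > 0" and r: "0 \<le> r" "r \<le> 1" shows "Xi a r = XiG a r"
proof -
  consider "r = 0" | "r = 1" | "0 < r \<and> r < 1" using r by linarith
  then show ?thesis
  proof cases
    case 1 then show ?thesis using a
      by (simp add: Xi_def XiG_def Sent_def pi1_def Gfun_def ln_q ln_mult field_simps)
  next
    case 2 then show ?thesis using a
      by (simp add: Xi_def XiG_def Sent_def pi1_def Gfun_def ln_q ln_mult field_simps)
  next
    case 3
    then have p: "a * r > 0" "a * (1 - r) > 0" "1 - r > 0" using a by auto
    have l1: "ln (a * r) = ln a + ln r" using a 3 by (simp add: ln_mult)
    have l2: "ln (a * (1 - r)) = ln a + ln (1 - r)" using a p by (simp add: ln_mult)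
    show ?thesis using 3 a
      unfolding Xi_def XiG_def Sent_def pi1_def Gfun_def ln_q[OF p(1)] ln_q[OF p(2)] l1 l2
      using p by (simp add: field_simps)
  qed
qed

lemma XiG_sym: "XiG a (1 - r) = XiG a r"
  unfolding XiG_def by (simp add: algebra_simps)

lemma XiG_cont: assumes "a > 0" shows "continuous_on {0..1} (XiG a)"
proof (rule continuous_at_imp_continuous_on, intro ballI)
  fix r :: real assume "r \<in> {0..1}"
  then have r: "a * r \<ge> 0" "a * (1 - r) \<ge> 0" using assms by auto
  have c1: "isCont (\<lambda>r. Gfun (a * r)) r"
    by (rule isCont_o2[where f="\<lambda>r. a*r", OF _ Gfun_isCont[OF r(1)]]) simp
  have c2: "isCont (\<lambda>r. Gfun (a * (1 - r))) r"
    by (rule isCont_o2[where f="\<lambda>r. a*(1-r)", OF _ Gfun_isCont[OF r(2)]]) simp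
  show "isCont (XiG a) r" unfolding XiG_def
    by (intro continuous_intros c1 c2) (use assms in auto)
qed

lemma XiG_d1: assumes a: "a > 0" and r: "0 < r" "r < 1"
  shows "(XiG a has_real_derivative (G1 (a * r) - G1 (a * (1 - r)) - a * (1 - 2 * r))) (at r)"
proof -
  have p: "a * r > 0" "a * (1 - r) > 0" using a r by auto
  have h1: "((\<lambda>r. Gfun (a * r)) has_real_derivative G1 (a * r) * a) (at r)"
    by (rule DERIV_chain2[where g="\<lambda>r. a*r" and x=r, OF G1_deriv[OF p(1)]]) (auto intro!: derivative_eq_intros)
  have h2: "((\<lambda>r. Gfun (a * (1 - r))) has_real_derivative G1 (a * (1 - r)) * (- a)) (at r)"
    by (rule DERIV_chain2[where g="\<lambda>r. a*(1-r)" and x=r, OF G1_deriv[OF p(2)]]) (auto intro!: derivative_eq_intros)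
  have h3: "((\<lambda>r. a * r * (1 - r)) has_real_derivative a * (1 - 2 * r)) (at r)"
    by (auto intro!: derivative_eq_intros simp: algebra_simps)
  have "((\<lambda>r. ln a + (Gfun (a * r) + Gfun (a * (1 - r))) / a - a * r * (1 - r))
      has_real_derivative 0 + (G1 (a * r) * a + G1 (a * (1 - r)) * (- a)) / a - a * (1 - 2 * r)) (at r)"
    by (intro DERIV_add DERIV_diff DERIV_const DERIV_cdivide h1 h2 h3)
  moreover have eq: "0 + (G1 (a * r) * a + G1 (a * (1 - r)) * (- a)) / a - a * (1 - 2 * r)
     = G1 (a * r) - G1 (a * (1 - r)) - a * (1 - 2 * r)" using a by (simp add: field_simps)
  ultimately show ?thesis unfolding XiG_def[abs_def] by simp
qed

lemma XiG_d2: assumes a: "a > 0" and r: "0 < r" "r < 1"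
  shows "((\<lambda>r. G1 (a * r) - G1 (a * (1 - r)) - a * (1 - 2 * r)) has_real_derivative
     (a * G2 (a * r) + a * G2 (a * (1 - r)) + 2 * a)) (at r)"
proof -
  have p: "a * r > 0" "a * (1 - r) > 0" using a r by auto
  have h1: "((\<lambda>r. G1 (a * r)) has_real_derivative G2 (a * r) * a) (at r)"
    by (rule DERIV_chain2[where g="\<lambda>r. a*r" and x=r, OF G2_deriv[OF p(1)]]) (auto intro!: derivative_eq_intros)
  have h2: "((\<lambda>r. G1 (a * (1 - r))) has_real_derivative G2 (a * (1 - r)) * (- a)) (at r)"
    by (rule DERIV_chain2[where g="\<lambda>r. a*(1-r)" and x=r, OF G2_deriv[OF p(2)]]) (auto intro!: derivative_eq_intros)
  have "((\<lambda>r. G1 (a * r) - G1 (a * (1 - r)) - a * (1 - 2 * r)) has_real_derivative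
     G2 (a * r) * a - G2 (a * (1 - r)) * (- a) - a * (0 - 2 * 1)) (at r)"
    by (intro DERIV_diff h1 h2 DERIV_cmult DERIV_const DERIV_ident)
  then show ?thesis by (simp add: algebra_simps)
qed


lemma sc_core:
  fixes f f1 f2 :: "real \<Rightarrow> real"
  assumes cont: "continuous_on {0..1} f"
    and d1: "\<And>x. 0 < x \<Longrightarrow> x < 1 \<Longrightarrow> (f has_real_derivative f1 x) (at x)"
    and d2: "\<And>x. 0 < x \<Longrightarrow> x < 1 \<Longrightarrow> (f1 has_real_derivative f2 x) (at x)"
    and pos: "\<And>x. 0 < x \<Longrightarrow> x < 1 \<Longrightarrow> f2 x > 0"
    and xy: "0 \<le> x" "x < y" "y \<le> 1" and t: "0 < t" "t < 1"
  shows "f ((1 - t) * x + t * y) < (1 - t) * f x + t * f y"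
proof -
  have mono: "f1 p < f1 q" if "0 < p" "p < q" "q < 1" for p q
  proof -
    have "\<And>w. p \<le> w \<Longrightarrow> w \<le> q \<Longrightarrow> DERIV f1 w :> f2 w"
    proof -
      fix w assume "p \<le> w" "w \<le> q"
      then have "0 < w" "w < 1" using that by linarith+
      then show "DERIV f1 w :> f2 w" by (rule d2)
    qed
    from MVT2[OF \<open>p < q\<close> this] obtain z where z: "p < z" "z < q" "f1 q - f1 p = (q - p) * f2 z"
      by blast
    moreover have "(q - p) * f2 z > 0" using pos[of z] that z by simp
    ultimately show ?thesis by simp
  qed
  define z where "z = (1 - t) * x + t * y"
  have zx: "z - x = t * (y - x)" unfolding z_def by (simp add: algebra_simps)
  have yz: "y - z = (1 - t) * (y - x)" unfolding z_def by (simp add: algebra_simps)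
  have p1: "t * (y - x) > 0" using t xy by simp
  have p2: "(1 - t) * (y - x) > 0" using t xy by simp
  have xz: "x < z" using zx p1 by linarith
  have zy: "z < y" using yz p2 by linarith
  have "\<exists>l w. x < w \<and> w < z \<and> DERIV f w :> l \<and> f z - f x = (z - x) * l"
  proof (rule MVT[OF xz])
    show "continuous_on {x..z} f" using xy xz zy by (intro continuous_on_subset[OF cont]) auto
  next
    fix w assume "x < w" "w < z"
    then have "0 < w" "w < 1" using xy xz zy by linarith+
    then show "f differentiable (at w)" using d1 real_differentiable_def by blast
  qed
  then obtain l1 w1 where w1: "x < w1" "w1 < z" "DERIV f w1 :> l1" "f z - f x = (z - x) * l1" by blast
  have "\<exists>l w. z < w \<and> w < y \<and> DERIV f w :> l \<and> f y - f z = (y - z) * l"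
  proof (rule MVT[OF zy])
    show "continuous_on {z..y} f" using xy xz zy by (intro continuous_on_subset[OF cont]) auto
  next
    fix w assume "z < w" "w < y"
    then have "0 < w" "w < 1" using xy xz zy by linarith+
    then show "f differentiable (at w)" using d1 real_differentiable_def by blast
  qed
  then obtain l2 w2 where w2: "z < w2" "w2 < y" "DERIV f w2 :> l2" "f y - f z = (y - z) * l2" by blast
  have "l1 = f1 w1" using DERIV_unique[OF w1(3) d1[of w1]] w1 xy xz zy by linarith
  moreover have "l2 = f1 w2" using DERIV_unique[OF w2(3) d1[of w2]] w2 xy xz zy by linarith
  moreover have "f1 w1 < f1 w2" using mono[of w1 w2] w1 w2 xy by linarith
  ultimately have "l1 < l2" by simp
  have e1: "f x - f z = - (t * (y - x) * l1)" using w1(4) zx by simp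
  have e2: "f y - f z = (1 - t) * (y - x) * l2" using w2(4) yz by simp
  have "(1 - t) * f x + t * f y - f z = (1 - t) * (f x - f z) + t * (f y - f z)" by (simp add: algebra_simps)
  also have "\<dots> = t * (1 - t) * (y - x) * (l2 - l1)"
    unfolding e1 e2 by (simp add: algebra_simps)
  also have "\<dots> > 0" using t xy \<open>l1 < l2\<close> by simp
  finally have "f z < (1 - t) * f x + t * f y" by simp
  then show ?thesis unfolding z_def .
qed

lemma sc_lemma:
  fixes f f1 f2 :: "real \<Rightarrow> real"
  assumes cont: "continuous_on {0..1} f"
    and d1: "\<And>x. 0 < x \<Longrightarrow> x < 1 \<Longrightarrow> (f has_real_derivative f1 x) (at x)"
    and d2: "\<And>x. 0 < x \<Longrightarrow> x < 1 \<Longrightarrow> (f1 has_real_derivative f2 x) (at x)"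
    and pos: "\<And>x. 0 < x \<Longrightarrow> x < 1 \<Longrightarrow> f2 x > 0"
  shows "strict_convex_on {0..1} f"
  unfolding strict_convex_on_def
proof (intro ballI allI impI)
  fix x y t :: real assume x: "x \<in> {0..1}" and y: "y \<in> {0..1}" and h: "x \<noteq> y \<and> 0 < t \<and> t < 1"
  show "f ((1 - t) * x + t * y) < (1 - t) * f x + t * f y"
  proof (cases "x < y")
    case True then show ?thesis using sc_core[OF cont d1 d2 pos, of x y t] x y h by auto
  next
    case False then have "y < x" using h by auto
    then have "f ((1 - (1 - t)) * y + (1 - t) * x) < (1 - (1 - t)) * f y + (1 - t) * f x"
      using sc_core[OF cont d1 d2 pos, of y x "1 - t"] x y h by auto
    then show ?thesis by (simp add: algebra_simps)
  qed
qed

theorem mainTheorem14: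
  fixes \<alpha> :: real
  assumes "\<alpha> > 0"
  shows "continuous_on {0..1} (Xi \<alpha>)
       \<and> (\<forall>\<rho>\<in>{0..1}. Xi \<alpha> \<rho> = Xi \<alpha> (1 - \<rho>))
       \<and> strict_convex_on {0..1} (Xi \<alpha>)
       \<and> (\<forall>\<rho>\<in>{0<..<1}. Xi \<alpha> \<rho> < Xi \<alpha> 0)
       \<and> (\<forall>\<eta>>0. deriv (deriv Gfun) \<eta> + 1 > 0)"
proof -
  have eqs: "\<And>r. r \<in> {0..1} \<Longrightarrow> Xi \<alpha> r = XiG \<alpha> r" using Xi_eq[OF assms] by auto
  have C: "continuous_on {0..1} (Xi \<alpha>)"
    by (rule continuous_on_eq[OF XiG_cont[OF assms]]) (simp add: eqs)
  have S: "\<forall>\<rho>\<in>{0..1}. Xi \<alpha> \<rho> = Xi \<alpha> (1 - \<rho>)"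
  proof
    fix r :: real assume r: "r \<in> {0..1}"
    then have "1 - r \<in> {0..1}" by simp
    then have "Xi \<alpha> (1 - r) = XiG \<alpha> (1 - r)" by (rule eqs)
    then show "Xi \<alpha> r = Xi \<alpha> (1 - r)" using eqs[OF r] XiG_sym[of \<alpha> r] by simp
  qed
  have d1: "(Xi \<alpha> has_real_derivative (G1 (\<alpha> * r) - G1 (\<alpha> * (1 - r)) - \<alpha> * (1 - 2 * r))) (at r)"
    if "0 < r" "r < 1" for r
    using XiG_d1[OF assms that]
  proof (rule has_field_derivative_transform_within_open[where S="{0<..<1}"])
    fix x :: real assume "x \<in> {0<..<1}" then show "XiG \<alpha> x = Xi \<alpha> x" using eqs[of x] by simp
  qed (use that in auto)
  have pos: "\<alpha> * G2 (\<alpha> * r) + \<alpha> * G2 (\<alpha> * (1 - r)) + 2 * \<alpha> > 0" if "0 < r" "r < 1" for r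
  proof -
    have "G2 (\<alpha> * r) + 1 > 0" "G2 (\<alpha> * (1 - r)) + 1 > 0" using G2_pos assms that by auto
    then have "\<alpha> * ((G2 (\<alpha> * r) + 1) + (G2 (\<alpha> * (1 - r)) + 1)) > 0" using assms by simp
    then show ?thesis by (simp add: algebra_simps)
  qed
  have SC: "strict_convex_on {0..1} (Xi \<alpha>)"
    by (rule sc_lemma[OF C d1 XiG_d2[OF assms] pos])
  have L: "\<forall>\<rho>\<in>{0<..<1}. Xi \<alpha> \<rho> < Xi \<alpha> 0"
  proof
    fix r :: real assume r: "r \<in> {0<..<1}"
    have "Xi \<alpha> r < (1 - r) * Xi \<alpha> 0 + r * Xi \<alpha> 1"
    proof -
      have "Xi \<alpha> ((1 - r) * 0 + r * 1) < (1 - r) * Xi \<alpha> 0 + r * Xi \<alpha> 1"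
      proof -
        have H: "\<forall>x\<in>{0..1}. \<forall>y\<in>{0..1}. \<forall>t. x \<noteq> y \<and> 0 < t \<and> t < 1 \<longrightarrow>
            Xi \<alpha> ((1 - t) * x + t * y) < (1 - t) * Xi \<alpha> x + t * Xi \<alpha> y"
          using SC unfolding strict_convex_on_def .
        have m: "(0::real) \<in> {0..1}" "(1::real) \<in> {0..1}" by auto
        have "\<forall>t. (0::real) \<noteq> 1 \<and> 0 < t \<and> t < 1 \<longrightarrow>
            Xi \<alpha> ((1 - t) * 0 + t * 1) < (1 - t) * Xi \<alpha> 0 + t * Xi \<alpha> 1"
          using bspec[OF bspec[OF H m(1)] m(2)] .
        then show ?thesis using r by simp
      qed
      then show ?thesis by simp
    qed
    moreover have "Xi \<alpha> 1 = Xi \<alpha> 0" using S[rule_format, of 0] by simp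
    ultimately show "Xi \<alpha> r < Xi \<alpha> 0" by (simp add: algebra_simps)
  qed
  have D: "\<forall>\<eta>>0. deriv (deriv Gfun) \<eta> + 1 > 0"
  proof (intro allI impI)
    fix e :: real assume "e > 0"
    then show "deriv (deriv Gfun) e + 1 > 0" using deriv2_G[of e] G2_pos[of e] by simp
  qed
  show ?thesis using C S SC L D by blast
qed

end
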